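(* Let $\rho=\frac14\big(I_4+\sum_i\beta_i\sigma_i\otimes I_2+\sum_i\gamma_i I_2\otimes\sigma_i+\sum_{l,k}(\delta_\rho)_{lk}\sigma_l\otimes\sigma_k\big)$ be a density matrix on $\mathbb{C}^2\otimes\mathbb{C}^2$, and let $\sigma_1\ge\sigma_2\ge\sigma_3\ge0$ be the singular values of $\delta_\rho\in M_3(\mathbb{R})$. Then the maximal singlet fraction of $\rho$ is $$f(\rho)=\begin{cases}\frac14(1+\sigma_1+\sigma_2+\sigma_3) & \text{if } \det\delta_\rho<0,\\[2pt] \frac14(1+\sigma_1+\sigma_2-\sigma_3) & \text{if } \det\delta_\rho\ge0.\end{cases}$$
   Context: $\sigma_1,\sigma_2,\sigma_3$ inside the expansion of $\rho$ denote the Pauli matrices (the singular values are a separate notation). A density matrix is a positive semidefinite trace-one matrix. A unit vector $\psi\in\mathbb{C}^2\otimes\mathbb{C}^2$ is maximally entangled if the partial trace of $|\psi\rangle\langle\psi|$ over either factor equals $\frac12 I_2$. The maximal singlet fraction is $f(\rho)=\max\{\langle\psi|\rho|\psi\rangle:\psi \text{ maximally entangled}\}$. *)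

theory Defs
  imports "HOL-Analysis.Analysis" "HOL-Library.Numeral_Type"
begin

text \<open>The two-qubit space C^2 (x) C^2 is modelled as complex ^ (2 * 2) (index pairs);
  operators on it as complex ^ (2 * 2) ^ (2 * 2). Indices of the qubit type 2 are 0, 1.
  Pauli indices 1,2,3 of the paper correspond to the elements 0,1,2 of type 3.\<close>

type_synonym qubit_op = "complex^2^2"
type_synonym two_qubit_vec = "complex^(2 \<times> 2)"
type_synonym two_qubit_op = "complex^(2 \<times> 2)^(2 \<times> 2)"

definition cscale :: "complex \<Rightarrow> complex^'n^'m \<Rightarrow> complex^'n^'m" where
  "cscale c A = (\<chi> i j. c * A $ i $ j)"

definition kron :: "qubit_op \<Rightarrow> qubit_op \<Rightarrow> two_qubit_op" where
  "kron A B = (\<chi> p. \<chi> q. A $ fst p $ fst q * B $ snd p $ snd q)"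

definition pauli_x :: qubit_op where
  "pauli_x = (\<chi> i j. if i \<noteq> j then 1 else 0)"
definition pauli_y :: qubit_op where
  "pauli_y = (\<chi> i j. if i = 0 \<and> j = 1 then - \<i> else if i = 1 \<and> j = 0 then \<i> else 0)"
definition pauli_z :: qubit_op where
  "pauli_z = (\<chi> i j. if i = j then (if i = 0 then 1 else -1) else 0)"

definition pauli :: "3 \<Rightarrow> qubit_op" where
  "pauli k = (if k = 0 then pauli_x else if k = 1 then pauli_y else pauli_z)"

definition pauli_state :: "real^3 \<Rightarrow> real^3 \<Rightarrow> real^3^3 \<Rightarrow> two_qubit_op" where
  "pauli_state \<beta> \<gamma> \<delta> = cscale (1/4)
     (mat 1
      + (\<Sum>i\<in>UNIV. cscale (complex_of_real (\<beta> $ i)) (kron (pauli i) (mat 1)))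
      + (\<Sum>i\<in>UNIV. cscale (complex_of_real (\<gamma> $ i)) (kron (mat 1) (pauli i)))
      + (\<Sum>l\<in>UNIV. \<Sum>k\<in>UNIV. cscale (complex_of_real (\<delta> $ l $ k)) (kron (pauli l) (pauli k))))"

definition hermitian_op :: "two_qubit_op \<Rightarrow> bool" where
  "hermitian_op A \<longleftrightarrow> (\<forall>a b. A $ a $ b = cnj (A $ b $ a))"

definition expect :: "two_qubit_op \<Rightarrow> two_qubit_vec \<Rightarrow> complex" where
  "expect A v = (\<Sum>a\<in>UNIV. \<Sum>b\<in>UNIV. cnj (v $ a) * A $ a $ b * v $ b)"

definition positive_semidefinite :: "two_qubit_op \<Rightarrow> bool" where
  "positive_semidefinite A \<longleftrightarrow> hermitian_op A \<and>
     (\<forall>v. Im (expect A v) = 0 \<and> Re (expect A v) \<ge> 0)"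

definition density_matrix :: "two_qubit_op \<Rightarrow> bool" where
  "density_matrix A \<longleftrightarrow> positive_semidefinite A \<and> (\<Sum>a\<in>UNIV. A $ a $ a) = 1"

definition ptrace2 :: "two_qubit_vec \<Rightarrow> qubit_op" where
  "ptrace2 \<psi> = (\<chi> i k. \<Sum>j\<in>UNIV. \<psi> $ (i, j) * cnj (\<psi> $ (k, j)))"
definition ptrace1 :: "two_qubit_vec \<Rightarrow> qubit_op" where
  "ptrace1 \<psi> = (\<chi> j l. \<Sum>i\<in>UNIV. \<psi> $ (i, j) * cnj (\<psi> $ (i, l)))"

definition maximally_entangled :: "two_qubit_vec \<Rightarrow> bool" where
  "maximally_entangled \<psi> \<longleftrightarrow> norm \<psi> = 1 \<and>
     ptrace2 \<psi> = cscale (1/2) (mat 1) \<and> ptrace1 \<psi> = cscale (1/2) (mat 1)"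

text \<open>Maximal singlet fraction (the supremum is attained by compactness).\<close>
definition max_singlet_fraction :: "two_qubit_op \<Rightarrow> real" where
  "max_singlet_fraction \<rho> = Sup {Re (expect \<rho> \<psi>) | \<psi>. maximally_entangled \<psi>}"

definition singular_values_desc :: "real^3^3 \<Rightarrow> real^3 \<Rightarrow> bool" where
  "singular_values_desc M s \<longleftrightarrow>
     s $ 0 \<ge> s $ 1 \<and> s $ 1 \<ge> s $ 2 \<and> s $ 2 \<ge> 0 \<and>
     (\<exists>U V. orthogonal_matrix U \<and> orthogonal_matrix V \<and>
        M = U ** (\<chi> i j. if i = j then s $ i else 0) ** transpose V)"

end

theory Submission
  imports Defs
begin

lemma three3: "(3::3) = 0" by simp
lemma four3: "(4::3) = 1" by simp
lemma UNIV3': "(UNIV::3 set) = {0,1,2}" using exhaust_3 three3 by auto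
lemma sum3: "sum f (UNIV::3 set) = f 0 + f 1 + f 2" unfolding UNIV3' by (simp add: ac_simps)
lemma all3: "(\<forall>i::3. P i) \<longleftrightarrow> P 0 \<and> P 1 \<and> P 2" by (metis UNIV3' UNIV_I insertE singletonD)
lemma ex3: "(l::3) = 0 \<or> l = 1 \<or> l = 2" using UNIV3' by auto
lemma det3': "det (A::real^3^3) = A$0$0 * A$1$1 * A$2$2 +
    A$0$1 * A$1$2 * A$2$0 +
    A$0$2 * A$1$0 * A$2$1 -
    A$0$0 * A$1$2 * A$2$1 -
    A$0$1 * A$1$0 * A$2$2 -
    A$0$2 * A$1$1 * A$2$0"
  unfolding det_3 three3 by (simp add: algebra_simps)

lemma cofactor:
  fixes W :: "real^3^3"
  assumes "orthogonal_matrix W"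
  shows "W$(i+1)$(j+1)*W$(i+2)$(j+2) - W$(i+1)$(j+2)*W$(i+2)$(j+1) = det W * W$i$j"
proof -
  define C :: "real^3^3" where "C = (\<chi> i j. W$(i+1)$(j+1)*W$(i+2)$(j+2) - W$(i+1)$(j+2)*W$(i+2)$(j+1))"
  have 1: "W ** transpose C = mat (det W)"
    unfolding vec_eq_iff all3
    by (simp add: C_def matrix_matrix_mult_def transpose_def mat_def sum3 det3' three3 four3 algebra_simps)
  have "transpose C = transpose W ** (W ** transpose C)"
    using assms by (simp add: orthogonal_matrix_def matrix_mul_assoc)
  also have "\<dots> = (\<chi> i j. det W * W$j$i)"
    unfolding 1 by (simp add: vec_eq_iff matrix_matrix_mult_def transpose_def mat_def sum3 all3 three3 four3)
  finally have "transpose C $ j $ i = det W * W$i$j" by simp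
  then show ?thesis by (simp add: C_def transpose_def)
qed

lemma orth_eqs:
  fixes W :: "real^3^3"
  assumes "orthogonal_matrix W"
  shows "W$0$0*W$0$0 + W$1$0*W$1$0 + W$2$0*W$2$0 = 1"
    "W$0$1*W$0$1 + W$1$1*W$1$1 + W$2$1*W$2$1 = 1"
    "W$0$2*W$0$2 + W$1$2*W$1$2 + W$2$2*W$2$2 = 1"
    "W$0$0*W$0$1 + W$1$0*W$1$1 + W$2$0*W$2$1 = 0"
    "W$0$0*W$0$2 + W$1$0*W$1$2 + W$2$0*W$2$2 = 0"
    "W$0$1*W$0$2 + W$1$1*W$1$2 + W$2$1*W$2$2 = 0"
    "W$0$0*W$0$0 + W$0$1*W$0$1 + W$0$2*W$0$2 = 1"
    "W$1$0*W$1$0 + W$1$1*W$1$1 + W$1$2*W$1$2 = 1"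
    "W$2$0*W$2$0 + W$2$1*W$2$1 + W$2$2*W$2$2 = 1"
    "W$0$0*W$1$0 + W$0$1*W$1$1 + W$0$2*W$1$2 = 0"
    "W$0$0*W$2$0 + W$0$1*W$2$1 + W$0$2*W$2$2 = 0"
    "W$1$0*W$2$0 + W$1$1*W$2$1 + W$1$2*W$2$2 = 0"
proof -
  have A: "(transpose W ** W) $ i $ j = mat 1 $ i $ j" "(W ** transpose W) $ i $ j = mat 1 $ i $ j" for i j
    using assms unfolding orthogonal_matrix_def by auto
  show "W$0$0*W$0$0 + W$1$0*W$1$0 + W$2$0*W$2$0 = 1"
    "W$0$1*W$0$1 + W$1$1*W$1$1 + W$2$1*W$2$1 = 1"
    "W$0$2*W$0$2 + W$1$2*W$1$2 + W$2$2*W$2$2 = 1"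
    "W$0$0*W$0$1 + W$1$0*W$1$1 + W$2$0*W$2$1 = 0"
    "W$0$0*W$0$2 + W$1$0*W$1$2 + W$2$0*W$2$2 = 0"
    "W$0$1*W$0$2 + W$1$1*W$1$2 + W$2$1*W$2$2 = 0"
    using A(1)[of 0 0] A(1)[of 1 1] A(1)[of 2 2] A(1)[of 0 1] A(1)[of 0 2] A(1)[of 1 2]
    by (simp_all add: matrix_matrix_mult_def transpose_def mat_def sum3)
  show "W$0$0*W$0$0 + W$0$1*W$0$1 + W$0$2*W$0$2 = 1"
    "W$1$0*W$1$0 + W$1$1*W$1$1 + W$1$2*W$1$2 = 1"
    "W$2$0*W$2$0 + W$2$1*W$2$1 + W$2$2*W$2$2 = 1"
    "W$0$0*W$1$0 + W$0$1*W$1$1 + W$0$2*W$1$2 = 0"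
    "W$0$0*W$2$0 + W$0$1*W$2$1 + W$0$2*W$2$2 = 0"
    "W$1$0*W$2$0 + W$1$1*W$2$1 + W$1$2*W$2$2 = 0"
    using A(2)[of 0 0] A(2)[of 1 1] A(2)[of 2 2] A(2)[of 0 1] A(2)[of 0 2] A(2)[of 1 2]
    by (simp_all add: matrix_matrix_mult_def transpose_def mat_def sum3)
qed

lemma rank1:
  fixes P :: "nat \<Rightarrow> nat \<Rightarrow> real"
  assumes R: "\<And>k m n. k < 4 \<Longrightarrow> m < 4 \<Longrightarrow> n < 4 \<Longrightarrow> P k k * P m n = P k m * P k n"
    and S: "P 0 0 + P 1 1 + P 2 2 + P 3 3 = 4"
  shows "\<exists>x. \<forall>m n. m < 4 \<longrightarrow> n < 4 \<longrightarrow> P m n = 8 * x m * x n"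
proof -
  obtain k where k: "k < 4" "P k k > 0"
  proof (cases "P 0 0 > 0")
    case True then show ?thesis using that[of 0] by auto
  next
    case f0: False
    show ?thesis
    proof (cases "P 1 1 > 0")
      case True then show ?thesis using that[of 1] by auto
    next
      case f1: False
      show ?thesis
      proof (cases "P 2 2 > 0")
        case True then show ?thesis using that[of 2] by auto
      next
        case False
        then have "P 3 3 > 0" using f0 f1 S by linarith
        then show ?thesis using that[of 3] by auto
      qed
    qed
  qed
  define r where "r = sqrt (8 * P k k)"
  have r: "r * r = 8 * P k k" "r > 0" using k by (auto simp: r_def)
  define x where "x n = P k n / r" for n
  have "P m n = 8 * x m * x n" if "m < 4" "n < 4" for m n
  proof -
    have "8 * x m * x n = 8 * (P k m * P k n) / (r * r)" by (simp add: x_def)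
    also have "\<dots> = P m n" using R[OF k(1) that] r k by (simp add: field_simps)
    finally show ?thesis by simp
  qed
  then show ?thesis by blast
qed

definition TT :: "real \<Rightarrow> real \<Rightarrow> real \<Rightarrow> real \<Rightarrow> real^3^3" where
 "TT x0 x1 x2 x3 = (\<chi> l k.
   if l = 0 then (if k = 0 then 2*x0^2-2*x1^2-2*x2^2+2*x3^2 else if k = 1 then -4*x0*x1-4*x2*x3 else -4*x0*x2+4*x1*x3)
   else if l = 1 then (if k = 0 then -4*x0*x1+4*x2*x3 else if k = 1 then -2*x0^2+2*x1^2-2*x2^2+2*x3^2 else 4*x0*x3+4*x1*x2)
   else (if k = 0 then 4*x0*x2+4*x1*x3 else if k = 1 then 4*x0*x3-4*x1*x2 else 2*x0^2+2*x1^2-2*x2^2-2*x3^2))"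

lemma TT_at: "TT x0 x1 x2 x3 $ 0 $ 0 = 2*x0^2-2*x1^2-2*x2^2+2*x3^2"
  "TT x0 x1 x2 x3 $ 0 $ 1 = -4*x0*x1-4*x2*x3"
  "TT x0 x1 x2 x3 $ 0 $ 2 = -4*x0*x2+4*x1*x3"
  "TT x0 x1 x2 x3 $ 1 $ 0 = -4*x0*x1+4*x2*x3"
  "TT x0 x1 x2 x3 $ 1 $ 1 = -2*x0^2+2*x1^2-2*x2^2+2*x3^2"
  "TT x0 x1 x2 x3 $ 1 $ 2 = 4*x0*x3+4*x1*x2"
  "TT x0 x1 x2 x3 $ 2 $ 0 = 4*x0*x2+4*x1*x3"
  "TT x0 x1 x2 x3 $ 2 $ 1 = 4*x0*x3-4*x1*x2"
  "TT x0 x1 x2 x3 $ 2 $ 2 = 2*x0^2+2*x1^2-2*x2^2-2*x3^2"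
  by (simp_all add: TT_def)

lemma TT_orth:
  assumes N: "x0^2+x1^2+x2^2+x3^2 = 1/2"
  shows "orthogonal_matrix (TT x0 x1 x2 x3)" "det (TT x0 x1 x2 x3) = -1"
proof -
  have N': "x0*x0+x1*x1+x2*x2+x3*x3 = 1/2" using N by (simp add: power2_eq_square)
  show "orthogonal_matrix (TT x0 x1 x2 x3)"
    unfolding orthogonal_matrix vec_eq_iff all3
    apply (simp add: matrix_matrix_mult_def transpose_def mat_def sum3 TT_at)
    using N' by algebra
  show "det (TT x0 x1 x2 x3) = -1"
    unfolding det3' TT_at using N' by algebra
qed

lemma piv:
  fixes p00 p11 p22 p33 p01 p02 p03 p12 p13 p23 :: real
  assumes "p00 > 0" "p00*p11 = p01*p01" "p00*p12 = p01*p02" "p00*p13 = p01*p03"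
    "p00*p22 = p02*p02" "p00*p23 = p02*p03" "p00*p33 = p03*p03"
  shows "\<exists>x0 x1 x2 x3. p00 = 8*x0*x0 \<and> p11 = 8*x1*x1 \<and> p22 = 8*x2*x2 \<and> p33 = 8*x3*x3 \<and>
     p01 = 8*x0*x1 \<and> p02 = 8*x0*x2 \<and> p03 = 8*x0*x3 \<and> p12 = 8*x1*x2 \<and> p13 = 8*x1*x3 \<and> p23 = 8*x2*x3"
proof -
  define r where "r = sqrt (8 * p00)"
  have r: "r * r = 8 * p00" "r > 0" using assms(1) by (auto simp: r_def)
  show ?thesis
    apply (rule exI[of _ "p00 / r"], rule exI[of _ "p01 / r"], rule exI[of _ "p02 / r"], rule exI[of _ "p03 / r"])
    using assms r by (auto simp: field_simps)
qed

lemma TT_surj: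
  fixes T :: "real^3^3"
  assumes oT: "orthogonal_matrix T" and dT: "det T = -1"
  shows "\<exists>x0 x1 x2 x3. x0^2+x1^2+x2^2+x3^2 = 1/2 \<and> T = TT x0 x1 x2 x3"
proof -
  define a where "a = T$0$0"
  define b where "b = T$0$1"
  define c where "c = T$0$2"
  define d where "d = T$1$0"
  define e where "e = T$1$1"
  define f where "f = T$1$2"
  define g where "g = T$2$0"
  define h where "h = T$2$1"
  define i where "i = T$2$2"
  note E = a_def b_def c_def d_def e_def f_def g_def h_def i_def
  note O = orth_eqs[OF oT, folded E]
  have o1: "a*a+d*d+g*g = 1" and o2: "b*b+e*e+h*h = 1" and o3: "c*c+f*f+i*i = 1"
   and o4: "a*b+d*e+g*h = 0" and o5: "a*c+d*f+g*i = 0" and o6: "b*c+e*f+h*i = 0"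
   and o7: "a*a+b*b+c*c = 1" and o8: "d*d+e*e+f*f = 1" and o9: "g*g+h*h+i*i = 1"
   and o10: "a*d+b*e+c*f = 0" and o11: "a*g+b*h+c*i = 0" and o12: "d*g+e*h+f*i = 0"
    using O by auto
  have C: "T$(p+1)$(q+1)*T$(p+2)$(q+2) - T$(p+1)$(q+2)*T$(p+2)$(q+1) = - T$p$q" for p q
    using cofactor[OF oT, of p q] dT by simp
  have c1: "e*i-f*h = -a" using C[of 0 0] by (simp add: E)
  have c2: "f*g-d*i = -b" using C[of 0 1] by (simp add: E three3 algebra_simps)
  have c3: "d*h-e*g = -c" using C[of 0 2] by (simp add: E three3 four3 algebra_simps)
  have c4: "h*c-i*b = -d" using C[of 1 0] by (simp add: E three3 algebra_simps)
  have c5: "i*a-g*c = -e" using C[of 1 1] by (simp add: E three3 four3 algebra_simps)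
  have c6: "g*b-h*a = -f" using C[of 1 2] by (simp add: E three3 four3 algebra_simps)
  have c7: "b*f-c*e = -g" using C[of 2 0] by (simp add: E three3 four3 algebra_simps)
  have c8: "c*d-a*f = -h" using C[of 2 1] by (simp add: E three3 four3 algebra_simps)
  have c9: "a*e-b*d = -i" using C[of 2 2] by (simp add: E three3 four3 algebra_simps)
  have I0: "(1+a-e+i)*(1-a+e+i) = (-(b+d))*(-(b+d))" "(1+a-e+i)*(f-h) = (-(b+d))*(g-c)" "(1+a-e+i)*(g+c) = (-(b+d))*(f+h)" "(1+a-e+i)*(1-a-e-i) = (g-c)*(g-c)" "(1+a-e+i)*(d-b) = (g-c)*(f+h)" "(1+a-e+i)*(1+a+e-i) = (f+h)*(f+h)" using o1 o2 o3 o4 o5 o6 o7 o8 o9 o10 o11 o12 c1 c2 c3 c4 c5 c6 c7 c8 c9 by algebra+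
  have I1: "(1-a+e+i)*(1+a-e+i) = (-(b+d))*(-(b+d))" "(1-a+e+i)*(g-c) = (-(b+d))*(f-h)" "(1-a+e+i)*(f+h) = (-(b+d))*(g+c)" "(1-a+e+i)*(1-a-e-i) = (f-h)*(f-h)" "(1-a+e+i)*(d-b) = (f-h)*(g+c)" "(1-a+e+i)*(1+a+e-i) = (g+c)*(g+c)" using o1 o2 o3 o4 o5 o6 o7 o8 o9 o10 o11 o12 c1 c2 c3 c4 c5 c6 c7 c8 c9 by algebra+
  have I2: "(1-a-e-i)*(1+a-e+i) = (g-c)*(g-c)" "(1-a-e-i)*(-(b+d)) = (g-c)*(f-h)" "(1-a-e-i)*(f+h) = (g-c)*(d-b)" "(1-a-e-i)*(1-a+e+i) = (f-h)*(f-h)" "(1-a-e-i)*(g+c) = (f-h)*(d-b)" "(1-a-e-i)*(1+a+e-i) = (d-b)*(d-b)" using o1 o2 o3 o4 o5 o6 o7 o8 o9 o10 o11 o12 c1 c2 c3 c4 c5 c6 c7 c8 c9 by algebra+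
  have I3: "(1+a+e-i)*(1+a-e+i) = (f+h)*(f+h)" "(1+a+e-i)*(-(b+d)) = (f+h)*(g+c)" "(1+a+e-i)*(g-c) = (f+h)*(d-b)" "(1+a+e-i)*(1-a+e+i) = (g+c)*(g+c)" "(1+a+e-i)*(f-h) = (g+c)*(d-b)" "(1+a+e-i)*(1-a-e-i) = (d-b)*(d-b)" using o1 o2 o3 o4 o5 o6 o7 o8 o9 o10 o11 o12 c1 c2 c3 c4 c5 c6 c7 c8 c9 by algebra+
  have ex: "\<exists>x0 x1 x2 x3. (1+a-e+i) = 8*x0*x0 \<and> (-(b+d)) = 8*x0*x1 \<and> (g-c) = 8*x0*x2 \<and> (f+h) = 8*x0*x3 \<and> (1-a+e+i) = 8*x1*x1 \<and> (f-h) = 8*x1*x2 \<and> (g+c) = 8*x1*x3 \<and> (1-a-e-i) = 8*x2*x2 \<and> (d-b) = 8*x2*x3 \<and> (1+a+e-i) = 8*x3*x3"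
  proof (cases "(1+a-e+i) > 0")
    case True
    from piv[OF True I0] show ?thesis by (auto simp: algebra_simps)
  next
    case F0: False
    show ?thesis
    proof (cases "(1-a+e+i) > 0")
      case True
      from piv[OF True I1]
      obtain y1 y0 y2 y3 where "(1-a+e+i) = 8*y1*y1 \<and> (1+a-e+i) = 8*y0*y0 \<and> (1-a-e-i) = 8*y2*y2 \<and> (1+a+e-i) = 8*y3*y3 \<and>
        (-(b+d)) = 8*y1*y0 \<and> (f-h) = 8*y1*y2 \<and> (g+c) = 8*y1*y3 \<and> (g-c) = 8*y0*y2 \<and> (f+h) = 8*y0*y3 \<and> (d-b) = 8*y2*y3"
        by (auto simp: algebra_simps)
      then show ?thesis by (intro exI[of _ y0] exI[of _ y1] exI[of _ y2] exI[of _ y3]) (auto simp: algebra_simps)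
    next
      case F1: False
      show ?thesis
      proof (cases "(1-a-e-i) > 0")
        case True
        from piv[OF True I2]
        obtain y2 y0 y1 y3 where "(1-a-e-i) = 8*y2*y2 \<and> (1+a-e+i) = 8*y0*y0 \<and> (1-a+e+i) = 8*y1*y1 \<and> (1+a+e-i) = 8*y3*y3 \<and>
          (g-c) = 8*y2*y0 \<and> (f-h) = 8*y2*y1 \<and> (d-b) = 8*y2*y3 \<and> (-(b+d)) = 8*y0*y1 \<and> (f+h) = 8*y0*y3 \<and> (g+c) = 8*y1*y3"
          by (auto simp: algebra_simps)
        then show ?thesis by (intro exI[of _ y0] exI[of _ y1] exI[of _ y2] exI[of _ y3]) (auto simp: algebra_simps)
      next
        case False
        then have True: "(1+a+e-i) > 0" using F0 F1 by linarith
        from piv[OF True I3]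
        obtain y3 y0 y1 y2 where "(1+a+e-i) = 8*y3*y3 \<and> (1+a-e+i) = 8*y0*y0 \<and> (1-a+e+i) = 8*y1*y1 \<and> (1-a-e-i) = 8*y2*y2 \<and>
          (f+h) = 8*y3*y0 \<and> (g+c) = 8*y3*y1 \<and> (d-b) = 8*y3*y2 \<and> (-(b+d)) = 8*y0*y1 \<and> (g-c) = 8*y0*y2 \<and> (f-h) = 8*y1*y2"
          by (auto simp: algebra_simps)
        then show ?thesis by (intro exI[of _ y0] exI[of _ y1] exI[of _ y2] exI[of _ y3]) (auto simp: algebra_simps)
      qed
    qed
  qed
  then obtain x0 x1 x2 x3 where X: "(1+a-e+i) = 8*x0*x0 \<and> (-(b+d)) = 8*x0*x1 \<and> (g-c) = 8*x0*x2 \<and> (f+h) = 8*x0*x3 \<and> (1-a+e+i) = 8*x1*x1 \<and> (f-h) = 8*x1*x2 \<and> (g+c) = 8*x1*x3 \<and> (1-a-e-i) = 8*x2*x2 \<and> (d-b) = 8*x2*x3 \<and> (1+a+e-i) = 8*x3*x3" by blast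
  have "x0^2+x1^2+x2^2+x3^2 = 1/2" using X by (simp add: power2_eq_square; linarith)
  moreover have "T = TT x0 x1 x2 x3"
    unfolding vec_eq_iff all3 TT_at using X by (simp add: power2_eq_square E[symmetric]; linarith)
  ultimately show ?thesis by blast
qed


lemma trace_le1:
  fixes W :: "real^3^3"
  assumes "orthogonal_matrix W" "det W = -1"
  shows "W$0$0 + W$1$1 + W$2$2 \<le> 1"
proof -
  obtain x0 x1 x2 x3 where N: "x0^2+x1^2+x2^2+x3^2 = 1/2" and W: "W = TT x0 x1 x2 x3"
    using TT_surj[OF assms] by blast
  have "x2^2 \<ge> 0" by simp
  then show ?thesis unfolding W TT_at using N by linarith
qed

lemma diag_le1:
  fixes W :: "real^3^3"
  assumes "orthogonal_matrix W"
  shows "W$0$0 \<le> 1" "W$1$1 \<le> 1" "W$2$2 \<le> 1"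
proof -
  note O = orth_eqs[OF assms]
  have sq: "u \<le> 1" if "u * u + v * v + w * w = 1" for u v w :: real
  proof (rule ccontr)
    assume "\<not> u \<le> 1"
    then have "u*u > 1" by (metis less_1_mult not_le)
    moreover have "v * v \<ge> 0" "w * w \<ge> 0" by simp_all
    ultimately show False using that by linarith
  qed
  show "W$0$0 \<le> 1" using sq[OF O(1)] .
  show "W$1$1 \<le> 1" using sq[of "W$1$1" "W$0$1" "W$2$1"] O(2) by (simp add: algebra_simps)
  show "W$2$2 \<le> 1" using sq[of "W$2$2" "W$0$2" "W$1$2"] O(3) by (simp add: algebra_simps)
qed

definition dg :: "real^3 \<Rightarrow> real^3^3" where
  "dg s = (\<chi> i j. if i = j then s $ i else 0)"

lemma sum_delta_W:
  fixes U V T :: "real^3^3"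
  shows "(\<Sum>l\<in>UNIV. \<Sum>k\<in>UNIV. (U ** dg s ** transpose V)$l$k * T$l$k) =
         (\<Sum>i\<in>UNIV. s$i * (transpose U ** T ** V)$i$i)"
  by (simp add: matrix_matrix_mult_def transpose_def dg_def sum3 algebra_simps)

lemma det_dg: "det (dg s) = s$0 * s$1 * s$2"
  by (simp add: det3' dg_def)

lemma det_pm1: "orthogonal_matrix (Q::real^3^3) \<Longrightarrow> det Q = 1 \<or> det Q = -1"
  using det_orthogonal_matrix by blast

lemma bound:
  fixes U V T :: "real^3^3" and s :: "real^3"
  assumes oT: "orthogonal_matrix T" and dT: "det T = -1"
    and oU: "orthogonal_matrix U" and oV: "orthogonal_matrix V"
    and s: "s$0 \<ge> s$1" "s$1 \<ge> s$2" "s$2 \<ge> 0"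
  shows "(\<Sum>l\<in>UNIV. \<Sum>k\<in>UNIV. (U ** dg s ** transpose V)$l$k * T$l$k) \<le>
     (if det (U ** dg s ** transpose V) < 0 then s$0 + s$1 + s$2 else s$0 + s$1 - s$2)"
proof -
  define W where "W = transpose U ** T ** V"
  have oW: "orthogonal_matrix W" unfolding W_def
    by (intro orthogonal_matrix_mul oT oV) (simp add: oU)
  have dW: "det W = - (det U * det V)" unfolding W_def by (simp add: det_mul det_transpose dT)
  have ddel: "det (U ** dg s ** transpose V) = det U * det V * (s$0 * s$1 * s$2)"
    by (simp add: det_mul det_transpose det_dg)
  have eq: "(\<Sum>l\<in>UNIV. \<Sum>k\<in>UNIV. (U ** dg s ** transpose V)$l$k * T$l$k) = s$0 * W$0$0 + s$1 * W$1$1 + s$2 * W$2$2"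
    unfolding sum_delta_W W_def by (simp add: sum3)
  note d1 = diag_le1[OF oW]
  have gen: "s$0 * W$0$0 + s$1 * W$1$1 + s$2 * W$2$2 \<le> s$0 + s$1 + s$2"
  proof -
    have "s$0 * W$0$0 \<le> s$0" using mult_left_mono[OF d1(1), of "s$0"] s by simp
    moreover have "s$1 * W$1$1 \<le> s$1" using mult_left_mono[OF d1(2), of "s$1"] s by simp
    moreover have "s$2 * W$2$2 \<le> s$2" using mult_left_mono[OF d1(3), of "s$2"] s by simp
    ultimately show ?thesis by linarith
  qed
  show ?thesis
  proof (cases "det (U ** dg s ** transpose V) < 0")
    case True then show ?thesis using gen eq by simp
  next
    case False
    show ?thesis
    proof (cases "s$2 = 0")
      case True then show ?thesis using gen eq False by simp
    next
      case s2: False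
      then have pos: "s$0 * s$1 * s$2 > 0" using s by simp
      have "det U * det V = 1"
        using det_pm1[OF oU] det_pm1[OF oV] False pos ddel by (auto simp: mult_less_0_iff)
      then have "det W = -1" using dW by simp
      then have tr: "W$0$0 + W$1$1 + W$2$2 \<le> 1" using trace_le1 oW by blast
      have A: "(s$0 - s$1) * (1 - W$0$0) \<ge> 0" using s d1 by simp
      have B: "(s$1 - s$2) * (2 - W$0$0 - W$1$1) \<ge> 0" using s d1 by simp
      have C: "s$2 * (1 - W$0$0 - W$1$1 - W$2$2) \<ge> 0" using s tr by simp
      have "s$0 * W$0$0 + s$1 * W$1$1 + s$2 * W$2$2 \<le> s$0 + s$1 - s$2"
        using A B C by (simp add: algebra_simps)
      then show ?thesis using eq False by simp
    qed
  qed
qed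

lemma attain:
  fixes U V :: "real^3^3" and s :: "real^3"
  assumes oU: "orthogonal_matrix U" and oV: "orthogonal_matrix V"
    and s: "s$0 \<ge> s$1" "s$1 \<ge> s$2" "s$2 \<ge> 0"
  shows "\<exists>T. orthogonal_matrix T \<and> det T = -1 \<and> (\<Sum>l\<in>UNIV. \<Sum>k\<in>UNIV. (U ** dg s ** transpose V)$l$k * T$l$k) =
     (if det (U ** dg s ** transpose V) < 0 then s$0 + s$1 + s$2 else s$0 + s$1 - s$2)"
proof -
  define \<epsilon> where "\<epsilon> = - (det U * det V)"
  have e: "\<epsilon> = 1 \<or> \<epsilon> = -1" using det_pm1[OF oU] det_pm1[OF oV] unfolding \<epsilon>_def by auto
  define W0 :: "real^3^3" where "W0 = (\<chi> i j. if i = j then (if i = 2 then \<epsilon> else 1) else 0)"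
  have oW0: "orthogonal_matrix W0"
    unfolding orthogonal_matrix vec_eq_iff all3 using e
    by (auto simp: W0_def matrix_matrix_mult_def transpose_def mat_def sum3)
  have dW0: "det W0 = \<epsilon>" by (simp add: W0_def det3')
  define T where "T = U ** W0 ** transpose V"
  have oT: "orthogonal_matrix T" unfolding T_def
    by (intro orthogonal_matrix_mul oU oW0) (simp add: oV)
  have "det T = det U * det V * \<epsilon>" unfolding T_def by (simp add: det_mul det_transpose dW0)
  then have dT: "det T = -1" using det_pm1[OF oU] det_pm1[OF oV] unfolding \<epsilon>_def by auto
  have "transpose U ** T ** V = (transpose U ** U) ** W0 ** (transpose V ** V)"
    unfolding T_def by (simp add: matrix_mul_assoc)
  also have "\<dots> = W0" using oU oV by (simp add: orthogonal_matrix_def)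
  finally have TW: "transpose U ** T ** V = W0" .
  have val: "(\<Sum>l\<in>UNIV. \<Sum>k\<in>UNIV. (U ** dg s ** transpose V)$l$k * T$l$k) = s$0 + s$1 + \<epsilon> * s$2"
    unfolding sum_delta_W TW by (simp add: sum3 W0_def)
  have ddel: "det (U ** dg s ** transpose V) = det U * det V * (s$0 * s$1 * s$2)"
    by (simp add: det_mul det_transpose det_dg)
  have "s$0 + s$1 + \<epsilon> * s$2 = (if det (U ** dg s ** transpose V) < 0 then s$0 + s$1 + s$2 else s$0 + s$1 - s$2)"
  proof (cases "s$2 = 0")
    case True then show ?thesis by simp
  next
    case False
    then have pos: "s$0 * s$1 * s$2 > 0" using s by simp
    show ?thesis
      using det_pm1[OF oU] det_pm1[OF oV] pos ddel unfolding \<epsilon>_def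
      by (elim disjE) auto
  qed
  then show ?thesis using oT dT val by auto
qed


lemma two2: "(2::2) = 0" by simp
lemma ex2: "(x::2) = 0 \<or> x = 1" using exhaust_2[of x] two2 by auto
lemma UNIV2': "(UNIV::2 set) = {0,1}"
proof (rule set_eqI)
  fix x :: 2 show "x \<in> UNIV \<longleftrightarrow> x \<in> {0,1}" using ex2[of x] by simp
qed
lemma sum2: "sum f (UNIV::2 set) = f 0 + f 1" unfolding UNIV2' by (simp add: ac_simps)
lemma sumprod: "sum f (UNIV::('a::finite\<times>'b::finite) set) = (\<Sum>i\<in>UNIV. \<Sum>j\<in>UNIV. f (i,j))"
proof -
  have "sum f (UNIV::('a\<times>'b) set) = sum f (UNIV \<times> UNIV)" by simp
  also have "\<dots> = (\<Sum>i\<in>UNIV. \<Sum>j\<in>UNIV. f (i,j))" unfolding sum.cartesian_product by simp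
  finally show ?thesis .
qed
lemma sum22: "sum f (UNIV::(2\<times>2) set) = f (0,0) + f (0,1) + f (1,0) + f (1,1)"
  unfolding sumprod sum2 by (simp add: ac_simps)

definition phi :: "complex \<Rightarrow> complex \<Rightarrow> two_qubit_vec" where
 "phi a b = (\<chi> p. if p = (0,0) then a else if p = (0,1) then b
     else if p = (1,0) then - cnj b else cnj a)"

lemma phi_at: "phi a b $ (0,0) = a" "phi a b $ (0,1) = b"
  "phi a b $ (1,0) = - cnj b" "phi a b $ (1,1) = cnj a"
  by (simp_all add: phi_def)

lemma px: "pauli_x $ 0 $ 0 = 0" "pauli_x $ 0 $ 1 = 1" "pauli_x $ 1 $ 0 = 1" "pauli_x $ 1 $ 1 = 0"
  by (simp_all add: pauli_x_def)
lemma py: "pauli_y $ 0 $ 0 = 0" "pauli_y $ 0 $ 1 = -\<i>" "pauli_y $ 1 $ 0 = \<i>" "pauli_y $ 1 $ 1 = 0"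
  by (simp_all add: pauli_y_def)
lemma pz: "pauli_z $ 0 $ 0 = 1" "pauli_z $ 0 $ 1 = 0" "pauli_z $ 1 $ 0 = 0" "pauli_z $ 1 $ 1 = -1"
  by (simp_all add: pauli_z_def)
lemma p012: "pauli 0 = pauli_x" "pauli 1 = pauli_y" "pauli 2 = pauli_z" by (simp_all add: pauli_def)
lemma mat1_2: "(mat 1 :: qubit_op) $ 0 $ 0 = 1" "(mat 1 :: qubit_op) $ 0 $ 1 = 0"
   "(mat 1 :: qubit_op) $ 1 $ 0 = 0" "(mat 1 :: qubit_op) $ 1 $ 1 = 1"
  by (simp_all add: mat_def)

lemma expect_kron: "expect (kron A B) v = (\<Sum>i\<in>UNIV. \<Sum>j\<in>UNIV. \<Sum>k\<in>UNIV. \<Sum>l\<in>UNIV.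
   cnj (v$(i,j)) * A$i$k * B$j$l * v$(k,l))"
  unfolding expect_def kron_def sumprod
  by (simp add: sum_distrib_left sum_distrib_right mult.assoc)

lemma expect_kron2: "expect (kron A B) v =
   (cnj (v$(0,0)) * A$0$0 * B$0$0 * v$(0,0) + cnj (v$(0,0)) * A$0$0 * B$0$1 * v$(0,1) +
    cnj (v$(0,0)) * A$0$1 * B$0$0 * v$(1,0) + cnj (v$(0,0)) * A$0$1 * B$0$1 * v$(1,1)) +
   (cnj (v$(0,1)) * A$0$0 * B$1$0 * v$(0,0) + cnj (v$(0,1)) * A$0$0 * B$1$1 * v$(0,1) +
    cnj (v$(0,1)) * A$0$1 * B$1$0 * v$(1,0) + cnj (v$(0,1)) * A$0$1 * B$1$1 * v$(1,1)) +
   (cnj (v$(1,0)) * A$1$0 * B$0$0 * v$(0,0) + cnj (v$(1,0)) * A$1$0 * B$0$1 * v$(0,1) +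
    cnj (v$(1,0)) * A$1$1 * B$0$0 * v$(1,0) + cnj (v$(1,0)) * A$1$1 * B$0$1 * v$(1,1)) +
   (cnj (v$(1,1)) * A$1$0 * B$1$0 * v$(0,0) + cnj (v$(1,1)) * A$1$0 * B$1$1 * v$(0,1) +
    cnj (v$(1,1)) * A$1$1 * B$1$0 * v$(1,0) + cnj (v$(1,1)) * A$1$1 * B$1$1 * v$(1,1))"
  unfolding expect_kron sum2 by (simp add: algebra_simps)

lemma expect_phi_kron: "expect (kron A B) (phi a b) =
   (cnj a * A$0$0 * B$0$0 * a + cnj a * A$0$0 * B$0$1 * b +
    cnj a * A$0$1 * B$0$0 * (- cnj b) + cnj a * A$0$1 * B$0$1 * cnj a) +
   (cnj b * A$0$0 * B$1$0 * a + cnj b * A$0$0 * B$1$1 * b +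
    cnj b * A$0$1 * B$1$0 * (- cnj b) + cnj b * A$0$1 * B$1$1 * cnj a) +
   (- b * A$1$0 * B$0$0 * a + - b * A$1$0 * B$0$1 * b +
    - b * A$1$1 * B$0$0 * (- cnj b) + - b * A$1$1 * B$0$1 * cnj a) +
   (a * A$1$0 * B$1$0 * a + a * A$1$0 * B$1$1 * b +
    a * A$1$1 * B$1$0 * (- cnj b) + a * A$1$1 * B$1$1 * cnj a)"
  unfolding expect_kron2 phi_at complex_cnj_cnj complex_cnj_minus ..

lemma expect_pp00: "Re (expect (kron (pauli 0) (pauli 0)) (phi a b)) = TT (Re a) (Im a) (Re b) (Im b) $ 0 $ 0"
  unfolding expect_phi_kron p012 px py pz TT_at by (simp add: algebra_simps power2_eq_square)
lemma expect_pp01: "Re (expect (kron (pauli 0) (pauli 1)) (phi a b)) = TT (Re a) (Im a) (Re b) (Im b) $ 0 $ 1"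
  unfolding expect_phi_kron p012 px py pz TT_at by (simp add: algebra_simps power2_eq_square)
lemma expect_pp02: "Re (expect (kron (pauli 0) (pauli 2)) (phi a b)) = TT (Re a) (Im a) (Re b) (Im b) $ 0 $ 2"
  unfolding expect_phi_kron p012 px py pz TT_at by (simp add: algebra_simps power2_eq_square)
lemma expect_pp10: "Re (expect (kron (pauli 1) (pauli 0)) (phi a b)) = TT (Re a) (Im a) (Re b) (Im b) $ 1 $ 0"
  unfolding expect_phi_kron p012 px py pz TT_at by (simp add: algebra_simps power2_eq_square)
lemma expect_pp11: "Re (expect (kron (pauli 1) (pauli 1)) (phi a b)) = TT (Re a) (Im a) (Re b) (Im b) $ 1 $ 1"
  unfolding expect_phi_kron p012 px py pz TT_at by (simp add: algebra_simps power2_eq_square)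
lemma expect_pp12: "Re (expect (kron (pauli 1) (pauli 2)) (phi a b)) = TT (Re a) (Im a) (Re b) (Im b) $ 1 $ 2"
  unfolding expect_phi_kron p012 px py pz TT_at by (simp add: algebra_simps power2_eq_square)
lemma expect_pp20: "Re (expect (kron (pauli 2) (pauli 0)) (phi a b)) = TT (Re a) (Im a) (Re b) (Im b) $ 2 $ 0"
  unfolding expect_phi_kron p012 px py pz TT_at by (simp add: algebra_simps power2_eq_square)
lemma expect_pp21: "Re (expect (kron (pauli 2) (pauli 1)) (phi a b)) = TT (Re a) (Im a) (Re b) (Im b) $ 2 $ 1"
  unfolding expect_phi_kron p012 px py pz TT_at by (simp add: algebra_simps power2_eq_square)
lemma expect_pp22: "Re (expect (kron (pauli 2) (pauli 2)) (phi a b)) = TT (Re a) (Im a) (Re b) (Im b) $ 2 $ 2"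
  unfolding expect_phi_kron p012 px py pz TT_at by (simp add: algebra_simps power2_eq_square)
lemma expect_pp: "Re (expect (kron (pauli l) (pauli k)) (phi a b)) = TT (Re a) (Im a) (Re b) (Im b) $ l $ k"
proof -
  have "l = 0 \<or> l = 1 \<or> l = 2" "k = 0 \<or> k = 1 \<or> k = 2" using ex3 by auto
  then show ?thesis using expect_pp00 expect_pp01 expect_pp02 expect_pp10 expect_pp11 expect_pp12
     expect_pp20 expect_pp21 expect_pp22 by auto
qed

lemma expect_p1: "Re (expect (kron (pauli l) (mat 1)) (phi a b)) = 0"
proof -
  have "l = 0 \<or> l = 1 \<or> l = 2" using ex3 by auto
  then show ?thesis
    by (elim disjE; simp only: expect_phi_kron p012 px py pz mat1_2; simp add: algebra_simps)
qed

lemma expect_1p: "Re (expect (kron (mat 1) (pauli l)) (phi a b)) = 0"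
proof -
  have "l = 0 \<or> l = 1 \<or> l = 2" using ex3 by auto
  then show ?thesis
    by (elim disjE; simp only: expect_phi_kron p012 px py pz mat1_2; simp add: algebra_simps)
qed

lemma expect_id: "Re (expect (mat 1) (phi a b)) = 2*((Re a)^2 + (Im a)^2 + (Re b)^2 + (Im b)^2)"
  unfolding expect_def sum22 by (simp add: mat_def phi_at power2_eq_square)

lemma expect_add: "expect (A + B) v = expect A v + expect B v"
  by (simp add: expect_def distrib_left distrib_right sum.distrib)

lemma expect_cscale: "expect (cscale c A) v = c * expect A v"
  by (simp add: expect_def cscale_def sum_distrib_left mult_ac)

lemma expect_sum: "finite S \<Longrightarrow> expect (sum f S) v = (\<Sum>i\<in>S. expect (f i) v)"
proof (induction S rule: finite_induct)
  case empty then show ?case by (simp add: expect_def)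
next
  case (insert x F) then show ?case by (simp add: expect_add)
qed

lemma expect_state:
  "Re (expect (pauli_state \<beta> \<gamma> \<delta>) (phi a b)) =
     (2*((Re a)^2 + (Im a)^2 + (Re b)^2 + (Im b)^2) + (\<Sum>l\<in>UNIV. \<Sum>k\<in>UNIV. \<delta>$l$k * TT (Re a) (Im a) (Re b) (Im b) $ l $ k)) / 4"
  unfolding pauli_state_def
  by (simp add: expect_add expect_cscale expect_sum Re_sum expect_id expect_p1 expect_1p expect_pp)

lemma expect_scale: "expect A (\<chi> p. \<nu> * v$p) = (cnj \<nu> * \<nu>) * expect A v"
  by (simp add: expect_def sum_distrib_left mult_ac)

lemma all2: "(\<forall>p::2. P p) \<longleftrightarrow> P 0 \<and> P 1"
proof (intro iffI allI)
  fix p :: 2 assume "P 0 \<and> P 1" then show "P p" using ex2[of p] by auto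
qed simp
lemma all22: "(\<forall>p::2\<times>2. P p) \<longleftrightarrow> P (0,0) \<and> P (0,1) \<and> P (1,0) \<and> P (1,1)"
  by (simp add: split_paired_All all2 conj_assoc)

lemma ptrace2_entry: "ptrace2 \<psi> $ i $ k = \<psi>$(i,0) * cnj(\<psi>$(k,0)) + \<psi>$(i,1) * cnj(\<psi>$(k,1))"
  unfolding ptrace2_def sum2 by simp
lemma ptrace1_entry: "ptrace1 \<psi> $ j $ l = \<psi>$(0,j) * cnj(\<psi>$(0,l)) + \<psi>$(1,j) * cnj(\<psi>$(1,l))"
  unfolding ptrace1_def sum2 by simp
lemma cs_entry: "cscale (1/2) (mat 1) $ i $ k = (if i = k then 1/2 else (0::complex))"
  by (simp add: cscale_def mat_def)

lemma zcnj: "z * cnj z = complex_of_real ((Re z)^2 + (Im z)^2)"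
  by (simp add: complex_eq_iff power2_eq_square)

lemma phi_me:
  assumes N: "(Re a)^2 + (Im a)^2 + (Re b)^2 + (Im b)^2 = 1/2"
  shows "maximally_entangled (phi a b)"
proof -
  have "norm (phi a b) = sqrt (2*((Re a)^2 + (Im a)^2 + (Re b)^2 + (Im b)^2))"
    unfolding norm_vec_def L2_set_def sum22 phi_at by (simp add: cmod_power2)
  then have n: "norm (phi a b) = 1" using N by simp
  have Nc: "a * cnj a + b * cnj b = 1/2"
  proof -
    have "a * cnj a + b * cnj b = complex_of_real ((Re a)^2 + (Im a)^2 + (Re b)^2 + (Im b)^2)"
      unfolding zcnj by simp
    then show ?thesis using N by simp
  qed
  have Nc': "cnj a * a + cnj b * b = 1/2" "b * cnj b + a * cnj a = 1/2" "cnj b * b + cnj a * a = 1/2"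
    using Nc by (simp_all add: mult.commute add.commute)
  have p2: "ptrace2 (phi a b) = cscale (1/2) (mat 1)"
    unfolding vec_eq_iff all2 ptrace2_entry cs_entry phi_at using Nc Nc'
    by (simp add: algebra_simps)
  have p1: "ptrace1 (phi a b) = cscale (1/2) (mat 1)"
    unfolding vec_eq_iff all2 ptrace1_entry cs_entry phi_at using Nc Nc'
    by (simp add: algebra_simps)
  show ?thesis unfolding maximally_entangled_def using n p1 p2 by simp
qed

lemma me_char:
  assumes "maximally_entangled \<psi>"
  shows "\<exists>\<nu> a b. cnj \<nu> * \<nu> = 1 \<and> (Re a)^2 + (Im a)^2 + (Re b)^2 + (Im b)^2 = 1/2 \<and>
           \<psi> = (\<chi> p. \<nu> * phi a b $ p)"
proof -
  define p where "p = \<psi> $ (0,0)"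
  define q where "q = \<psi> $ (0,1)"
  define r where "r = \<psi> $ (1,0)"
  define s where "s = \<psi> $ (1,1)"
  have P: "ptrace2 \<psi> = cscale (1/2) (mat 1)" using assms unfolding maximally_entangled_def by simp
  have h1: "p * cnj p + q * cnj q = 1/2"
    using arg_cong[OF P, of "\<lambda>M. M$0$0"] unfolding ptrace2_entry cs_entry p_def q_def by simp
  have h2: "r * cnj r + s * cnj s = 1/2"
    using arg_cong[OF P, of "\<lambda>M. M$1$1"] unfolding ptrace2_entry cs_entry r_def s_def by simp
  have h3: "p * cnj r + q * cnj s = 0"
    using arg_cong[OF P, of "\<lambda>M. M$0$1"] unfolding ptrace2_entry cs_entry p_def q_def r_def s_def by simp
  have h3': "cnj p * r + cnj q * s = 0"
  proof -
    have "cnj (p * cnj r + q * cnj s) = 0" using h3 by simp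
    then show ?thesis by (simp add: mult.commute)
  qed
  define \<mu> where "\<mu> = 2 * (p * s - q * r)"
  have er: "r = - \<mu> * cnj q" unfolding \<mu>_def using h1 h3' by algebra
  have es: "s = \<mu> * cnj p" unfolding \<mu>_def using h1 h3' by algebra
  have "\<mu> * cnj \<mu> * (p * cnj p + q * cnj q) = 1/2"
  proof -
    have "\<mu> * cnj \<mu> * (p * cnj p + q * cnj q) = r * cnj r + s * cnj s"
      unfolding er es by (simp add: algebra_simps)
    then show ?thesis using h2 by simp
  qed
  then have mu1: "\<mu> * cnj \<mu> = 1" using h1 by simp
  define \<nu> where "\<nu> = csqrt \<mu>"
  have nu2: "\<nu> * \<nu> = \<mu>" unfolding \<nu>_def using power2_csqrt[of \<mu>] by (simp add: power2_eq_square)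
  have "cmod \<mu> = 1"
  proof -
    have "complex_of_real ((cmod \<mu>)^2) = 1" using mu1 complex_norm_square[of \<mu>] by simp
    then have "(cmod \<mu>)^2 = 1" using of_real_eq_1_iff by blast
    then show ?thesis using norm_ge_zero[of \<mu>] by (auto simp: power2_eq_1_iff)
  qed
  then have "(cmod \<nu>)^2 = 1" using nu2 by (metis norm_mult power2_eq_square)
  then have "cmod \<nu> = 1" using norm_ge_zero[of \<nu>] by (auto simp: power2_eq_1_iff)
  then have nu1: "cnj \<nu> * \<nu> = 1" using complex_norm_square[of \<nu>] by (simp add: mult.commute)
  define a where "a = cnj \<nu> * p"
  define b where "b = cnj \<nu> * q"
  have "a * cnj a + b * cnj b = (cnj \<nu> * \<nu>) * (p * cnj p + q * cnj q)"
    unfolding a_def b_def by (simp add: algebra_simps)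
  then have ab: "a * cnj a + b * cnj b = 1/2" using nu1 h1 by simp
  have N: "(Re a)^2 + (Im a)^2 + (Re b)^2 + (Im b)^2 = 1/2"
  proof -
    have "a * cnj a + b * cnj b = complex_of_real ((Re a)^2 + (Im a)^2 + (Re b)^2 + (Im b)^2)"
      unfolding zcnj by simp
    then have "complex_of_real ((Re a)^2 + (Im a)^2 + (Re b)^2 + (Im b)^2) = 1/2" using ab by simp
    then have "complex_of_real ((Re a)^2 + (Im a)^2 + (Re b)^2 + (Im b)^2) = complex_of_real (1/2)" by simp
    then show ?thesis by (simp only: of_real_eq_iff)
  qed
  have nn: "\<nu> * cnj \<nu> = 1" using nu1 by (simp add: mult.commute)
  have "\<psi> = (\<chi> x. \<nu> * phi a b $ x)"
    unfolding vec_eq_iff all22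
  proof (intro conjI)
    show "\<psi> $ (0,0) = (\<chi> x. \<nu> * phi a b $ x) $ (0,0)"
      unfolding phi_at vec_lambda_beta a_def p_def[symmetric] using nn by (simp add: mult.assoc[symmetric])
    show "\<psi> $ (0,1) = (\<chi> x. \<nu> * phi a b $ x) $ (0,1)"
      unfolding phi_at vec_lambda_beta b_def q_def[symmetric] using nn by (simp add: mult.assoc[symmetric])
    show "\<psi> $ (1,0) = (\<chi> x. \<nu> * phi a b $ x) $ (1,0)"
      unfolding phi_at vec_lambda_beta b_def r_def[symmetric] er nu2[symmetric] by (simp add: algebra_simps)
    show "\<psi> $ (1,1) = (\<chi> x. \<nu> * phi a b $ x) $ (1,1)"
      unfolding phi_at vec_lambda_beta a_def s_def[symmetric] es nu2[symmetric] by (simp add: algebra_simps)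
  qed
  then show ?thesis using nu1 N by blast
qed
theorem proposition3p1:
  fixes \<beta> \<gamma> :: "real^3" and \<delta> :: "real^3^3" and s :: "real^3"
  assumes "density_matrix (pauli_state \<beta> \<gamma> \<delta>)"
    and "singular_values_desc \<delta> s"
  shows "max_singlet_fraction (pauli_state \<beta> \<gamma> \<delta>) =
           (if det \<delta> < 0 then (1 + s $ 0 + s $ 1 + s $ 2) / 4
            else (1 + s $ 0 + s $ 1 - s $ 2) / 4)"
proof -
  obtain U V where oU: "orthogonal_matrix U" and oV: "orthogonal_matrix V"
    and dl: "\<delta> = U ** (\<chi> i j. if i = j then s $ i else 0) ** transpose V"
    and s: "s$0 \<ge> s$1" "s$1 \<ge> s$2" "s$2 \<ge> 0"
    using assms(2) unfolding singular_values_desc_def by blast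
  have dl': "U ** dg s ** transpose V = \<delta>" using dl by (simp add: dg_def)
  define val where "val = (if det \<delta> < 0 then (1 + s $ 0 + s $ 1 + s $ 2) / 4
            else (1 + s $ 0 + s $ 1 - s $ 2) / 4)"
  define S where "S = {Re (expect (pauli_state \<beta> \<gamma> \<delta>) \<psi>) | \<psi>. maximally_entangled \<psi>}"
  have ub: "z \<le> val" if zS: "z \<in> S" for z
  proof -
    obtain \<psi> where z: "z = Re (expect (pauli_state \<beta> \<gamma> \<delta>) \<psi>)" and me: "maximally_entangled \<psi>"
      using zS unfolding S_def by blast
    obtain \<nu> a b where nu: "cnj \<nu> * \<nu> = 1" and N: "(Re a)^2 + (Im a)^2 + (Re b)^2 + (Im b)^2 = 1/2"
      and psi: "\<psi> = (\<chi> p. \<nu> * phi a b $ p)"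
      using me_char[OF me] by blast
    have z2: "z = (1 + (\<Sum>l\<in>UNIV. \<Sum>k\<in>UNIV. \<delta>$l$k * TT (Re a) (Im a) (Re b) (Im b) $ l $ k)) / 4"
      unfolding z psi expect_scale nu using expect_state N by simp
    have "(\<Sum>l\<in>UNIV. \<Sum>k\<in>UNIV. \<delta>$l$k * TT (Re a) (Im a) (Re b) (Im b) $ l $ k) \<le>
       (if det \<delta> < 0 then s$0 + s$1 + s$2 else s$0 + s$1 - s$2)"
      using bound[OF TT_orth[OF N] oU oV s] unfolding dl' .
    then show ?thesis unfolding z2 val_def by (simp split: if_splits)
  qed
  have att: "val \<in> S"
  proof -
    obtain T where oT: "orthogonal_matrix T" and dT: "det T = -1"
      and v: "(\<Sum>l\<in>UNIV. \<Sum>k\<in>UNIV. \<delta>$l$k * T$l$k) =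
         (if det \<delta> < 0 then s$0 + s$1 + s$2 else s$0 + s$1 - s$2)"
      using attain[OF oU oV s] unfolding dl' by blast
    obtain x0 x1 x2 x3 where N: "x0^2+x1^2+x2^2+x3^2 = 1/2" and T: "T = TT x0 x1 x2 x3"
      using TT_surj[OF oT dT] by blast
    have N': "(Re (Complex x0 x1))^2 + (Im (Complex x0 x1))^2 + (Re (Complex x2 x3))^2 + (Im (Complex x2 x3))^2 = 1/2"
      using N by simp
    have "Re (expect (pauli_state \<beta> \<gamma> \<delta>) (phi (Complex x0 x1) (Complex x2 x3))) = val"
      unfolding expect_state N' using v unfolding T val_def by simp
    then show ?thesis unfolding S_def using phi_me[OF N'] by blast
  qed
  have "max_singlet_fraction (pauli_state \<beta> \<gamma> \<delta>) = Sup S"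
    unfolding max_singlet_fraction_def S_def ..
  also have "\<dots> = val" using att ub by (intro cSup_eq_maximum) auto
  finally show ?thesis unfolding val_def .
qed

end
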